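(* Under the hypotheses of Lemma 1 (finite multi-set $\mathcal X=\{X_1,\dots,X_n\}$ of real symmetric $2\times2$ matrices, $\lambda_1$ the unique largest eigenvalue of $\mathcal X$, belonging to $X_1$, with $u_1=e_1$, $v_1=e_2$), let $S=\lim_{m\to\infty}\frac1m\log\sum_{i=1}^n\exp(mX_i)$. Then $e_2$ is an eigenvector of $S$ whose eigenvalue equals $\mu_*$, the largest eigenvalue of $\mathcal X$ (among the eigenvalues $\lambda_i,\mu_i$, excluding the occurrence $\lambda_1$ itself) whose associated eigenvector (i.e. $u_i$ for $\lambda_i$, $v_i$ for $\mu_i$) is not aligned with $e_1$.
   Context: $\exp$ and $\log$ denote the matrix exponential and matrix logarithm. Every real symmetric $2\times2$ matrix $X_i$ is written in spectral form $X_i=\lambda_i u_iu_i^{\mathsf T}+\mu_i v_iv_i^{\mathsf T}$ with $\lambda_i\ge\mu_i$, $u_i=(\cos\varphi_i,\sin\varphi_i)^{\mathsf T}$, $v_i=(-\sin\varphi_i,\cos\varphi_i)^{\mathsf T}$, $\varphi_i\in[-\pi/2,\pi/2]$. "The eigenvalues of $\mathcal X$" means the multi-set of all $2n$ numbers $\lambda_1,\mu_1,\dots,\lambda_n,\mu_n$; an eigenvalue is unique if it occurs exactly once in this multi-set. Two unit vectors are aligned if they are equal up to sign. $e_1=(1,0)^{\mathsf T}$, $e_2=(0,1)^{\mathsf T}$. *)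

theory Defs
  imports "HOL-Analysis.Analysis"
begin

type_synonym mat2 = "real^2^2"

definition matpow :: "mat2 \<Rightarrow> nat \<Rightarrow> mat2" where
  "matpow A k = ((\<lambda>B. A ** B) ^^ k) (mat 1)"

definition mexp :: "mat2 \<Rightarrow> mat2" where
  "mexp A = (\<Sum>k. (1 / fact k) *\<^sub>R matpow A k)"

definition mlog :: "mat2 \<Rightarrow> mat2" where
  "mlog A = (THE L. transpose L = L \<and> mexp L = A)"

definition outer :: "real^2 \<Rightarrow> mat2" where
  "outer w = (\<chi> i j. w $ i * w $ j)"

definition e1 :: "real^2" where "e1 = axis 1 1"
definition e2 :: "real^2" where "e2 = axis 2 1"

definition uvec :: "real \<Rightarrow> real^2" where
  "uvec \<phi> = vector [cos \<phi>, sin \<phi>]"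
definition vvec :: "real \<Rightarrow> real^2" where
  "vvec \<phi> = vector [- sin \<phi>, cos \<phi>]"

definition spec_mat :: "real \<Rightarrow> real \<Rightarrow> real \<Rightarrow> mat2" where
  "spec_mat lam mu \<phi> = lam *\<^sub>R outer (uvec \<phi>) + mu *\<^sub>R outer (vvec \<phi>)"

definition aligned :: "real^2 \<Rightarrow> real^2 \<Rightarrow> bool" where
  "aligned a b \<longleftrightarrow> a = b \<or> a = - b"

end

theory Submission
  imports Defs
begin

lemma mat2_eq: "(A::mat2) = B \<longleftrightarrow> A$1$1 = B$1$1 \<and> A$1$2 = B$1$2 \<and> A$2$1 = B$2$1 \<and> A$2$2 = B$2$2"
  by (auto simp: vec_eq_iff forall_2)

lemma spec_entries:
  "spec_mat a b t $1$1 = a * cos t ^2 + b * sin t ^2"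
  "spec_mat a b t $1$2 = (a - b) * cos t * sin t"
  "spec_mat a b t $2$1 = (a - b) * cos t * sin t"
  "spec_mat a b t $2$2 = a * sin t ^2 + b * cos t ^2"
  by (simp_all add: spec_mat_def outer_def uvec_def vvec_def power2_eq_square algebra_simps)

lemma mat1_entries: "(mat 1 :: mat2)$1$1 = 1" "(mat 1 :: mat2)$1$2 = 0" "(mat 1 :: mat2)$2$1 = 0" "(mat 1 :: mat2)$2$2 = 1"
  by (simp_all add: mat_def)

lemma spec_mult: "spec_mat a b t ** spec_mat a' b' t = spec_mat (a*a') (b*b') t"
proof -
  have cs: "cos t * cos t + sin t * sin t = 1" by (metis power2_eq_square sin_cos_squared_add2)
  show ?thesis
    unfolding mat2_eq matrix_matrix_mult_def
    using cs by (simp add: sum_2 spec_entries power2_eq_square, intro conjI; algebra)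
qed

lemma spec_one: "spec_mat 1 1 t = mat 1"
  unfolding mat2_eq by (simp add: spec_entries mat1_entries)

lemma matpow_spec: "matpow (spec_mat a b t) k = spec_mat (a^k) (b^k) t"
  by (induction k) (simp_all add: matpow_def spec_one spec_mult)

lemma spec_scale: "c *\<^sub>R spec_mat a b t = spec_mat (c*a) (c*b) t"
  unfolding mat2_eq by (simp add: spec_entries algebra_simps)

lemma spec_add: "spec_mat a b t + spec_mat a' b' t = spec_mat (a+a') (b+b') t"
  unfolding mat2_eq by (simp add: spec_entries algebra_simps)

lemma mexp_spec: "mexp (spec_mat a b t) = spec_mat (exp a) (exp b) t"
proof -
  have "(\<lambda>k. (1 / fact k) *\<^sub>R matpow (spec_mat a b t) k) =
        (\<lambda>k. (a^k /\<^sub>R fact k) *\<^sub>R spec_mat 1 0 t + (b^k /\<^sub>R fact k) *\<^sub>R spec_mat 0 1 t)"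
    by (simp add: matpow_spec spec_scale spec_add divide_inverse_commute)
  moreover have "(\<lambda>k. (a^k /\<^sub>R fact k) *\<^sub>R spec_mat 1 0 t + (b^k /\<^sub>R fact k) *\<^sub>R spec_mat 0 1 t)
     sums (exp a *\<^sub>R spec_mat 1 0 t + exp b *\<^sub>R spec_mat 0 1 t)"
    by (intro sums_add sums_scaleR_left exp_converges)
  ultimately show ?thesis unfolding mexp_def
    by (simp add: sums_iff spec_scale spec_add)
qed

lemma alg_double: "c * c+s * s = (1::real) \<Longrightarrow> (m+r)*(c * c) + (m-r)*(s * s) = m + r*(c * c - s * s)"
  by algebra
lemma alg_double2: "c * c+s * s = (1::real) \<Longrightarrow> (m+r)*(s * s) + (m-r)*(c * c) = m - r*(c * c - s * s)"
  by algebra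

lemma spec_double:
  "spec_mat (m+r) (m-r) t $1$1 = m + r * cos (2*t)"
  "spec_mat (m+r) (m-r) t $1$2 = r * sin (2*t)"
  "spec_mat (m+r) (m-r) t $2$1 = r * sin (2*t)"
  "spec_mat (m+r) (m-r) t $2$2 = m - r * cos (2*t)"
proof -
  have cs: "cos t * cos t + sin t * sin t = 1" by (metis power2_eq_square sin_cos_squared_add2)
  show "spec_mat (m+r) (m-r) t $1$1 = m + r * cos (2*t)"
    unfolding spec_entries cos_double power2_eq_square by (rule alg_double[OF cs])
  show "spec_mat (m+r) (m-r) t $1$2 = r * sin (2*t)"
    by (simp add: spec_entries sin_double)
  show "spec_mat (m+r) (m-r) t $2$1 = r * sin (2*t)"
    by (simp add: spec_entries sin_double)
  show "spec_mat (m+r) (m-r) t $2$2 = m - r * cos (2*t)"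
    unfolding spec_entries cos_double power2_eq_square by (rule alg_double2[OF cs])
qed

lemma sym_decomp:
  fixes L :: mat2
  assumes "transpose L = L"
  defines "r \<equiv> sqrt (((L$1$1 - L$2$2)/2)^2 + (L$1$2)^2)"
  shows "\<exists>t. L = spec_mat ((L$1$1 + L$2$2)/2 + r) ((L$1$1 + L$2$2)/2 - r) t"
proof -
  have "(transpose L)$1$2 = L$2$1" by (simp add: transpose_def)
  then have sym: "L$2$1 = L$1$2" using assms(1) by simp
  define p where "p = (L$1$1 - L$2$2)/2"
  define q where "q = L$1$2"
  have r2: "r^2 = p^2 + q^2" unfolding r_def p_def q_def by simp
  show ?thesis
  proof (cases "r = 0")
    case True
    then have "p^2 + q^2 = 0" using r2 by simp
    then have "p = 0" "q = 0" by (simp_all add: sum_power2_eq_zero_iff)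
    then have "L$1$1 = L$2$2" "L$1$2 = 0" unfolding p_def q_def by simp_all
    then show ?thesis using sym True unfolding mat2_eq
      by (intro exI[of _ 0]) (simp add: spec_entries)
  next
    case False
    have "r \<ge> 0" unfolding r_def by simp
    then have rpos: "r > 0" using False by simp
    have "(p/r)^2 + (q/r)^2 = (p^2+q^2)/r^2" by (simp add: power_divide add_divide_distrib)
    also have "\<dots> = 1" using rpos by (simp add: r2[symmetric])
    finally obtain t where t: "p/r = cos t" "q/r = sin t"
      by (rule sincos_total_2pi) auto
    have t2: "r * cos t = p" "r * sin t = q"
      using t rpos by (simp_all add: divide_eq_eq mult.commute)
    show ?thesis unfolding mat2_eq spec_double
      by (intro exI[of _ "t/2"]) (simp add: t2 p_def q_def sym field_simps)
  qed
qed

lemma spec_trace: "spec_mat a b t $1$1 + spec_mat a b t $2$2 = a + b"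
  unfolding spec_entries using sin_cos_squared_add[of t] by algebra

lemma spec_det: "spec_mat a b t $1$1 * spec_mat a b t $2$2 - spec_mat a b t $1$2 * spec_mat a b t $2$1 = a * b"
proof -
  have cs: "cos t * cos t + sin t * sin t = 1" by (metis power2_eq_square sin_cos_squared_add2)
  have gen: "\<And>c s. c * c+s * s = (1::real) \<Longrightarrow> (a * (c * c) + b * (s * s)) * (a * (s * s) + b * (c * c)) - (a - b) * c * s * ((a - b) * c * s) = a * b"
    by algebra
  show ?thesis unfolding spec_entries power2_eq_square by (rule gen[OF cs])
qed

definition Fint :: "(real \<Rightarrow> real) \<Rightarrow> real \<Rightarrow> real \<Rightarrow> mat2 \<Rightarrow> mat2" where
  "Fint g a b M = (if a = b then g a *\<^sub>R mat 1 else g b *\<^sub>R mat 1 + ((g a - g b)/(a-b)) *\<^sub>R (M - b *\<^sub>R mat 1))"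

lemma Fint_sym: "Fint g a b M = Fint g b a M"
proof (cases "a = b")
  case True then show ?thesis by (simp add: Fint_def)
next
  case False
  define D where "D = (g a - g b)/(a-b)"
  have D2: "(g b - g a)/(b-a) = D" unfolding D_def using False
    by (metis minus_diff_eq minus_divide_divide)
  have Dab: "D * (a - b) = g a - g b" unfolding D_def using False by simp
  have e: "g b + D * (x - b) = g a + D * (x - a)" for x
  proof -
    have "g b + D * (x - b) = g b + D * (a - b) + D * (x - a)" by (simp add: algebra_simps)
    then show ?thesis using Dab by simp
  qed
  show ?thesis using False unfolding Fint_def mat2_eq D2 D_def[symmetric]
    by (simp add: mat1_entries e)
qed

lemma spec_Fint: "spec_mat (g a) (g b) t = Fint g a b (spec_mat a b t)"
proof (cases "a = b")
  case True
  have "g b *\<^sub>R mat 1 = spec_mat (g b) (g b) t" using spec_scale[of "g b" 1 1 t] by (simp add: spec_one)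
  then show ?thesis using True by (simp add: Fint_def)
next
  case False
  define D where "D = (g a - g b)/(a-b)"
  have Dab: "D * (a - b) = g a - g b" unfolding D_def using False by simp
  have cs: "sin t ^2 = 1 - cos t ^2" by (simp add: sin_squared_eq)
  have cs2: "cos t ^2 = 1 - sin t ^2" by (simp add: cos_squared_eq)
  have e1: "g a * cos t ^2 + g b * sin t ^2 = g b + D * (a * cos t ^2 + b * sin t ^2 - b)"
  proof -
    have "g b + D * (a * cos t ^2 + b * sin t ^2 - b) = g b + (D * (a - b)) * cos t ^2"
      unfolding cs by (simp add: algebra_simps)
    then show ?thesis unfolding Dab cs by (simp add: algebra_simps)
  qed
  have e2: "g a * sin t ^2 + g b * cos t ^2 = g b + D * (a * sin t ^2 + b * cos t ^2 - b)"
  proof -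
    have "g b + D * (a * sin t ^2 + b * cos t ^2 - b) = g b + (D * (a - b)) * sin t ^2"
      unfolding cs2 by (simp add: algebra_simps)
    then show ?thesis unfolding Dab cs2 by (simp add: algebra_simps)
  qed
  have e3: "(g a - g b) * cos t * sin t = D * ((a - b) * cos t * sin t)"
  proof -
    have "D * ((a - b) * cos t * sin t) = (D*(a-b)) * cos t * sin t" by (simp add: algebra_simps)
    then show ?thesis unfolding Dab by (simp add: Dab)
  qed
  show ?thesis using False unfolding Fint_def mat2_eq D_def[symmetric]
    by (simp add: mat1_entries spec_entries e1 e2 e3)
qed

lemma spec_unique_fun:
  assumes "spec_mat a b t = spec_mat a' b' t'"
  shows "spec_mat (g a) (g b) t = spec_mat (g a') (g b') t'"
proof -
  have h1: "a + b = a' + b'" using spec_trace[of a b t] spec_trace[of a' b' t'] assms by simp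
  have h2: "a * b = a' * b'" using spec_det[of a b t] spec_det[of a' b' t'] assms by simp
  have bb: "b = a' + b' - a" using h1 by simp
  have "(a - a') * (a - b') = a' * b' - a * (a' + b' - a)" by (simp add: algebra_simps)
  also have "\<dots> = 0" using h2 bb by simp
  finally have "a = a' \<or> a = b'" by simp
  then show ?thesis
  proof
    assume "a = a'" then have "b = b'" using h1 by simp
    have "spec_mat (g a) (g b) t = Fint g a b (spec_mat a b t)" by (rule spec_Fint)
    also have "\<dots> = Fint g a b (spec_mat a' b' t')" using assms by simp
    also have "\<dots> = spec_mat (g a') (g b') t'" using \<open>a = a'\<close> \<open>b = b'\<close> spec_Fint by simp
    finally show ?thesis .
  next
    assume "a = b'" then have "b = a'" using h1 by simp
    have "spec_mat (g a) (g b) t = Fint g a b (spec_mat a b t)" by (rule spec_Fint)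
    also have "\<dots> = Fint g b a (spec_mat a' b' t')" using assms Fint_sym by simp
    also have "\<dots> = spec_mat (g a') (g b') t'" using \<open>a = b'\<close> \<open>b = a'\<close> spec_Fint by simp
    finally show ?thesis .
  qed
qed

lemma spec_transpose: "transpose (spec_mat a b t) = spec_mat a b t"
  unfolding mat2_eq transpose_def by (simp add: spec_entries)

lemma mlog_spec:
  assumes "a > 0" "b > 0"
  shows "mlog (spec_mat a b t) = spec_mat (ln a) (ln b) t"
  unfolding mlog_def
proof (rule the_equality)
  show "transpose (spec_mat (ln a) (ln b) t) = spec_mat (ln a) (ln b) t \<and> mexp (spec_mat (ln a) (ln b) t) = spec_mat a b t"
    using assms by (simp add: spec_transpose mexp_spec)
next
  fix L assume L: "transpose L = L \<and> mexp L = spec_mat a b t"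
  then obtain p q t' where Lp: "L = spec_mat p q t'" using sym_decomp by blast
  then have "spec_mat (exp p) (exp q) t' = spec_mat a b t" using L by (simp add: mexp_spec)
  then have "spec_mat (ln (exp p)) (ln (exp q)) t' = spec_mat (ln a) (ln b) t" by (rule spec_unique_fun)
  then show "L = spec_mat (ln a) (ln b) t" using Lp by simp
qed

lemma mlog_entries:
  fixes M :: mat2
  assumes sym: "M$2$1 = M$1$2" and xpos: "M$1$1 > 0" and det: "M$1$1 * M$2$2 - (M$1$2)^2 > 0"
  defines "r \<equiv> sqrt (((M$1$1 - M$2$2)/2)^2 + (M$1$2)^2)"
  defines "\<alpha> \<equiv> (M$1$1 + M$2$2)/2 + r" and "\<beta> \<equiv> (M$1$1 + M$2$2)/2 - r"
  assumes rpos: "r > 0"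
  shows "(mlog M)$1$2 = (ln \<alpha> - ln \<beta>)/(\<alpha> - \<beta>) * M$1$2"
    "(mlog M)$2$2 = ln \<beta> + (ln \<alpha> - ln \<beta>)/(\<alpha> - \<beta>) * (M$2$2 - \<beta>)"
proof -
  have "transpose M = M" unfolding mat2_eq transpose_def using sym by simp
  from sym_decomp[OF this] obtain th where th: "M = spec_mat \<alpha> \<beta> th"
    unfolding \<alpha>_def \<beta>_def r_def by blast
  have ab: "\<alpha> * \<beta> > 0" using spec_det[of \<alpha> \<beta> th] det sym th by (simp add: power2_eq_square)
  have zpos: "M$2$2 > 0"
  proof -
    have "M$1$1 * M$2$2 > 0" using det by (smt (verit) zero_le_power2)
    then show ?thesis using xpos by (simp add: zero_less_mult_iff)
  qed
  have "\<alpha> + \<beta> > 0" using spec_trace[of \<alpha> \<beta> th] th xpos zpos by simp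
  then have apos: "\<alpha> > 0" and bpos: "\<beta> > 0" using ab
    by (smt (verit) zero_less_mult_iff)+
  have neq: "\<alpha> \<noteq> \<beta>" unfolding \<alpha>_def \<beta>_def using rpos by simp
  have "mlog M = spec_mat (ln \<alpha>) (ln \<beta>) th" using th mlog_spec apos bpos by simp
  also have "\<dots> = Fint ln \<alpha> \<beta> M" using th spec_Fint by simp
  finally have ml: "mlog M = ln \<beta> *\<^sub>R mat 1 + ((ln \<alpha> - ln \<beta>)/(\<alpha> - \<beta>)) *\<^sub>R (M - \<beta> *\<^sub>R mat 1)"
    using neq by (simp add: Fint_def)
  show "(mlog M)$1$2 = (ln \<alpha> - ln \<beta>)/(\<alpha> - \<beta>) * M$1$2"
    "(mlog M)$2$2 = ln \<beta> + (ln \<alpha> - ln \<beta>)/(\<alpha> - \<beta>) * (M$2$2 - \<beta>)"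
    unfolding ml by (simp_all add: mat1_entries)
qed

lemma uvec_comp: "uvec p $ 1 = cos p" "uvec p $ 2 = sin p"
  by (simp_all add: uvec_def)
lemma vvec_comp: "vvec p $ 1 = - sin p" "vvec p $ 2 = cos p"
  by (simp_all add: vvec_def)
lemma e_comp: "e1 $ 1 = 1" "e1 $ 2 = 0" "e2 $ 1 = 0" "e2 $ 2 = 1"
  by (simp_all add: e1_def e2_def axis_def)

lemma vec2_eq: "(a::real^2) = b \<longleftrightarrow> a$1 = b$1 \<and> a$2 = b$2"
  by (auto simp: vec_eq_iff forall_2)

lemma aligned_u: "aligned (uvec p) e1 \<longleftrightarrow> sin p = 0"
proof
  assume "aligned (uvec p) e1"
  then show "sin p = 0" unfolding aligned_def vec2_eq by (auto simp: uvec_comp e_comp)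
next
  assume s: "sin p = 0"
  then have "cos p ^2 = 1" using sin_cos_squared_add[of p] by simp
  then have "cos p = 1 \<or> cos p = -1" by (simp add: power2_eq_1_iff)
  then show "aligned (uvec p) e1" unfolding aligned_def vec2_eq using s by (auto simp: uvec_comp e_comp)
qed

lemma aligned_v: "aligned (vvec p) e1 \<longleftrightarrow> cos p = 0"
proof
  assume "aligned (vvec p) e1"
  then show "cos p = 0" unfolding aligned_def vec2_eq by (auto simp: vvec_comp e_comp)
next
  assume s: "cos p = 0"
  then have "sin p ^2 = 1" using sin_cos_squared_add[of p] by simp
  then have "sin p = 1 \<or> sin p = -1" by (simp add: power2_eq_1_iff)
  then show "aligned (vvec p) e1" unfolding aligned_def vec2_eq using s by (auto simp: vvec_comp e_comp)
qed

lemma exp_seq_zero: "a < 0 \<Longrightarrow> (\<lambda>m::nat. exp (real m * a)) \<longlonglongrightarrow> 0"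
proof -
  assume a: "a < 0"
  have "(\<lambda>m::nat. exp a ^ m) \<longlonglongrightarrow> 0" using a by (intro LIMSEQ_power_zero) simp
  then show ?thesis by (simp add: exp_of_nat_mult)
qed



lemma key_real:
  fixes x y z E Zs Rh nn w t g :: real
  assumes xE: "x \<ge> E" and xU: "x \<le> nn * E" and zL: "z \<ge> w * Zs" and zU: "z \<le> nn * Zs"
    and yU: "\<bar>y\<bar> \<le> nn * Rh" and det: "x * z - y^2 \<ge> E * z"
    and w: "w > 0" "w \<le> 1" and nn: "nn \<ge> 1" and sep: "2 * nn * Zs \<le> E" and Zs: "Zs > 0"
    and t: "t \<ge> 1" and g: "g \<ge> 0" and lnEZ: "ln E - ln Zs = t * g"
  defines "r \<equiv> sqrt (((x - z)/2)^2 + y^2)"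
  defines "\<alpha> \<equiv> (x + z)/2 + r" and "\<beta> \<equiv> (x + z)/2 - r"
  defines "C \<equiv> g + ln (2*nn) - ln (w/(2*nn))"
  shows "\<alpha> - \<beta> \<ge> E/2" "\<beta> > 0" "\<alpha> > 0"
    "ln (w/(2*nn)) + ln Zs \<le> ln \<beta>" "ln \<beta> \<le> ln nn + ln Zs"
    "\<bar>(ln \<alpha> - ln \<beta>)/(\<alpha> - \<beta>) * y\<bar> \<le> t * C * nn * Rh * (2/E)"
    "\<bar>(ln \<alpha> - ln \<beta>)/(\<alpha> - \<beta>) * (z - \<beta>)\<bar> \<le> t * C * nn * Zs * (2/E)"
proof -
  have Epos: "E > 0" using sep Zs nn by (smt (verit) mult_pos_pos)
  have zpos: "z > 0" using zL w Zs by (smt (verit) mult_pos_pos)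
  have xpos: "x > 0" using xE Epos by simp
  have detpos: "x * z - y^2 > 0" using det Epos zpos by (smt (verit) mult_pos_pos)
  have r0: "r \<ge> 0" unfolding r_def by simp
  have r2: "r^2 = ((x - z)/2)^2 + y^2" unfolding r_def by simp
  have rL: "r \<ge> \<bar>(x - z)/2\<bar>" unfolding r_def
    by (metis abs_ge_zero le_add_same_cancel1 real_sqrt_abs real_sqrt_le_mono zero_le_power2)
  have rU: "r \<le> (x + z)/2"
  proof -
    have "r^2 \<le> ((x + z)/2)^2" using r2 detpos by (simp add: power2_eq_square field_simps)
    then show ?thesis using r0 xpos zpos by (simp add: abs_le_square_iff power2_le_iff_abs_le)
  qed
  have ab: "\<alpha> * \<beta> = x * z - y^2" unfolding \<alpha>_def \<beta>_def using r2 by (simp add: power2_eq_square field_simps)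
  have aL: "\<alpha> \<ge> x" unfolding \<alpha>_def using rL abs_ge_self[of "(x-z)/2"] by (simp add: field_simps)
  have aU: "\<alpha> \<le> x + z" unfolding \<alpha>_def using rU by (simp add: field_simps)
  show apos: "\<alpha> > 0" using aL xpos by simp
  show bpos: "\<beta> > 0"
  proof -
    have "\<alpha> * \<beta> > 0" using ab detpos by simp
    then show ?thesis using apos by (simp add: zero_less_mult_iff)
  qed
  have bz: "\<beta> \<le> z"
  proof -
    have "\<alpha> * \<beta> \<le> x * z" using ab by simp
    also have "\<dots> \<le> \<alpha> * z" using aL zpos by (simp add: mult_right_mono)
    finally have "\<alpha> * \<beta> \<le> \<alpha> * z" .
    then show ?thesis using apos by (rule mult_left_le_imp_le)
  qed
  have ZsE: "nn * Zs \<le> E/2" using sep by simp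
  have xz2: "x + z \<le> 2 * nn * E"
  proof -
    have "Zs \<le> E" using sep nn Zs by (smt (verit) mult_le_cancel_right1 mult_right_mono)
    then have "nn * Zs \<le> nn * E" using nn by simp
    then show ?thesis using xU zU by simp
  qed
  have bL: "\<beta> \<ge> z / (2 * nn)"
  proof -
    have "\<alpha> * \<beta> \<ge> E * z" using ab det by simp
    have "\<alpha> * (z / (2*nn)) \<le> (2 * nn * E) * (z / (2*nn))"
      using aU xz2 zpos nn by (intro mult_right_mono) auto
    also have "\<dots> = E * z" using nn by simp
    also have "\<dots> \<le> \<alpha> * \<beta>" using ab det by simp
    finally have "\<alpha> * (z / (2*nn)) \<le> \<alpha> * \<beta>" .
    then show ?thesis using apos by (rule mult_left_le_imp_le)
  qed
  have bL2: "\<beta> \<ge> (w/(2*nn)) * Zs"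
  proof -
    have "(w/(2*nn)) * Zs = (w * Zs) / (2*nn)" by simp
    also have "\<dots> \<le> z / (2*nn)" using zL nn by (simp add: divide_right_mono)
    finally show ?thesis using bL by simp
  qed
  show "\<alpha> - \<beta> \<ge> E/2"
  proof -
    have "\<alpha> - \<beta> = 2 * r" unfolding \<alpha>_def \<beta>_def by simp
    also have "\<dots> \<ge> x - z" using rL abs_ge_self[of "(x-z)/2"] by (simp add: field_simps)
    finally show ?thesis using xE zU ZsE by linarith
  qed
  then have abpos: "\<alpha> - \<beta> > 0" using Epos by simp
  have wn: "w/(2*nn) > 0" using w nn by simp
  show lb: "ln (w/(2*nn)) + ln Zs \<le> ln \<beta>"
  proof -
    have "ln (w/(2*nn)) + ln Zs = ln ((w/(2*nn)) * Zs)" using wn Zs by (intro ln_mult_pos[symmetric])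
    also have "\<dots> \<le> ln \<beta>" using bL2 wn Zs bpos w nn by (subst ln_le_cancel_iff) auto
    finally show ?thesis .
  qed
  show ub: "ln \<beta> \<le> ln nn + ln Zs"
  proof -
    have "ln \<beta> \<le> ln (nn * Zs)" using bz zU bpos nn Zs by (subst ln_le_cancel_iff) auto
    also have "\<dots> = ln nn + ln Zs" using nn Zs by (intro ln_mult_pos) auto
    finally show ?thesis .
  qed
  have laU: "ln \<alpha> \<le> ln (2*nn) + ln E"
  proof -
    have "ln \<alpha> \<le> ln (2*nn * E)" using aU xz2 apos nn Epos by (subst ln_le_cancel_iff) auto
    also have "\<dots> = ln (2*nn) + ln E" using nn Epos by (intro ln_mult_pos) auto
    finally show ?thesis .
  qed
  have L0: "ln \<alpha> - ln \<beta> \<ge> 0" using abpos bpos by simp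
  have C0: "ln (2*nn) - ln (w/(2*nn)) \<ge> 0"
  proof -
    have nn2: "1 \<le> nn * nn" using mult_mono[of 1 nn 1 nn] nn by simp
    have "w/(2*nn) \<le> 2*nn" using w nn nn2 by (simp add: field_simps)
    then show ?thesis using wn by simp
  qed
  have LU: "ln \<alpha> - ln \<beta> \<le> t * C"
  proof -
    have "ln \<alpha> - ln \<beta> \<le> t * g + (ln (2*nn) - ln (w/(2*nn)))" using laU lb lnEZ by linarith
    also have "\<dots> \<le> t * g + t * (ln (2*nn) - ln (w/(2*nn)))" using C0 t
      by (smt (verit) mult_le_cancel_right1 mult.commute)
    finally show ?thesis unfolding C_def by (simp add: algebra_simps)
  qed
  have Dbound: "\<bar>(ln \<alpha> - ln \<beta>)/(\<alpha> - \<beta>) * q\<bar> \<le> t * C * Q * (2/E)" if "\<bar>q\<bar> \<le> Q" for q Q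
  proof -
    have "\<bar>(ln \<alpha> - ln \<beta>)/(\<alpha> - \<beta>) * q\<bar> = (ln \<alpha> - ln \<beta>) * \<bar>q\<bar> / (\<alpha> - \<beta>)"
      using L0 abpos by (simp add: abs_mult)
    also have "\<dots> \<le> (t * C) * Q / (\<alpha> - \<beta>)"
      using L0 LU that abpos by (intro divide_right_mono mult_mono) auto
    also have "\<dots> \<le> (t * C) * Q / (E/2)"
    proof (rule divide_left_mono)
      show "0 \<le> t * C * Q" using L0 LU that t by (smt (verit) mult_nonneg_nonneg)
      show "E/2 \<le> \<alpha> - \<beta>" using \<open>\<alpha> - \<beta> \<ge> E/2\<close> .
      show "0 < (\<alpha> - \<beta>) * (E/2)" using abpos Epos by simp
    qed
    finally show ?thesis by simp
  qed
  show "\<bar>(ln \<alpha> - ln \<beta>)/(\<alpha> - \<beta>) * y\<bar> \<le> t * C * nn * Rh * (2/E)"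
    using Dbound[OF yU] by (simp add: mult.assoc)
  show "\<bar>(ln \<alpha> - ln \<beta>)/(\<alpha> - \<beta>) * (z - \<beta>)\<bar> \<le> t * C * nn * Zs * (2/E)"
    using Dbound[of "z - \<beta>" "nn * Zs"] bz bpos zU by (simp add: mult.assoc)
qed

lemma sum_bounds:
  fixes lam mu c s :: "nat \<Rightarrow> real" and n i0 :: nat and t l0 ms rho w :: real
  assumes n: "n \<ge> 1" and c0: "c 0 = 1" "s 0 = 0" and cs: "\<And>i. c i ^2 + s i ^2 = 1"
   and l0: "lam 0 = l0" and all: "\<And>i. i<n \<Longrightarrow> lam i \<le> l0 \<and> mu i \<le> l0"
   and hs: "\<And>i. i<n \<Longrightarrow> s i \<noteq> 0 \<Longrightarrow> lam i \<le> ms"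
   and hc: "\<And>i. i<n \<Longrightarrow> c i \<noteq> 0 \<Longrightarrow> mu i \<le> ms"
   and hr: "\<And>i. 0<i \<Longrightarrow> i<n \<Longrightarrow> lam i \<le> rho \<and> mu i \<le> rho"
   and i0: "i0 < n" and w: "(w = s i0 ^2 \<and> lam i0 = ms) \<or> (w = c i0 ^2 \<and> mu i0 = ms)"
   and t: "t \<ge> 0" and wpos: "w > 0"
  defines "x \<equiv> \<Sum>i<n. exp(t*lam i) * c i^2 + exp(t*mu i) * s i^2"
    and "y \<equiv> \<Sum>i<n. (exp(t*lam i) - exp(t*mu i)) * c i * s i"
    and "z \<equiv> \<Sum>i<n. exp(t*lam i) * s i^2 + exp(t*mu i) * c i^2"
  shows "x \<ge> exp(t*l0)" "x \<le> n * exp(t*l0)" "z \<ge> w * exp(t*ms)" "z \<le> n*exp(t*ms)"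
    "\<bar>y\<bar> \<le> n*exp(t*rho)" "x*z - y^2 \<ge> exp(t*l0)*z"
proof -
  have fin: "finite {..<n}" by simp
  have z0: "0 \<in> {..<n}" using n by simp
  show "x \<ge> exp(t*l0)"
  proof -
    have "exp(t*lam 0) * c 0^2 + exp(t*mu 0) * s 0^2 \<le> x" unfolding x_def
      by (rule member_le_sum[OF z0 _ fin]) simp
    then show ?thesis using c0 l0 by simp
  qed
  show "x \<le> n * exp(t*l0)"
  proof -
    have "x \<le> of_nat (card {..<n}) * exp(t*l0)" unfolding x_def
    proof (rule sum_bounded_above)
      fix i assume "i \<in> {..<n}"
      then have "t*lam i \<le> t*l0" "t * mu i \<le> t*l0" using all t by (auto intro: mult_left_mono)
      then have "exp(t*lam i) * c i^2 \<le> exp(t*l0) * c i^2" "exp(t*mu i) * s i^2 \<le> exp(t*l0) * s i^2"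
        by (auto intro: mult_right_mono)
      then have "exp(t*lam i) * c i^2 + exp(t*mu i) * s i^2 \<le> exp(t*l0) * (c i^2 + s i^2)"
        by (simp add: algebra_simps)
      then show "exp(t*lam i) * c i^2 + exp(t*mu i) * s i^2 \<le> exp(t*l0)" using cs by simp
    qed
    then show ?thesis by simp
  qed
  show "z \<ge> w * exp(t*ms)"
  proof -
    have "exp(t*lam i0) * s i0^2 + exp(t*mu i0) * c i0^2 \<le> z" unfolding z_def
      by (rule member_le_sum[OF _ _ fin]) (use i0 in auto)
    moreover have "w * exp(t*ms) \<le> exp(t*lam i0) * s i0^2 + exp(t*mu i0) * c i0^2"
      using w by (auto simp: mult.commute)
    ultimately show ?thesis by simp
  qed
  show "z \<le> n*exp(t*ms)"
  proof -
    have "z \<le> of_nat (card {..<n}) * exp(t*ms)" unfolding z_def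
    proof (rule sum_bounded_above)
      fix i assume i: "i \<in> {..<n}"
      have "exp(t*lam i) * s i^2 \<le> exp(t*ms) * s i^2"
      proof (cases "s i = 0")
        case False
        then have "t*lam i \<le> t*ms" using hs i t by (auto intro: mult_left_mono)
        then show ?thesis by (auto intro: mult_right_mono)
      qed simp
      moreover have "exp(t*mu i) * c i^2 \<le> exp(t*ms) * c i^2"
      proof (cases "c i = 0")
        case False
        then have "t*mu i \<le> t*ms" using hc i t by (auto intro: mult_left_mono)
        then show ?thesis by (auto intro: mult_right_mono)
      qed simp
      ultimately have "exp(t*lam i) * s i^2 + exp(t*mu i) * c i^2 \<le> exp(t*ms) * (c i^2 + s i^2)"
        by (simp add: algebra_simps)
      then show "exp(t*lam i) * s i^2 + exp(t*mu i) * c i^2 \<le> exp(t*ms)" using cs by simp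
    qed
    then show ?thesis by simp
  qed
  show "\<bar>y\<bar> \<le> n*exp(t*rho)"
  proof -
    have "\<bar>y\<bar> \<le> (\<Sum>i<n. \<bar>(exp(t*lam i) - exp(t*mu i)) * c i * s i\<bar>)" unfolding y_def
      by (rule sum_abs)
    also have "\<dots> \<le> of_nat (card {..<n}) * exp(t*rho)"
    proof (rule sum_bounded_above)
      fix i assume i: "i \<in> {..<n}"
      show "\<bar>(exp(t*lam i) - exp(t*mu i)) * c i * s i\<bar> \<le> exp(t*rho)"
      proof (cases "i = 0")
        case True then show ?thesis using c0 by simp
      next
        case False
        then have "t*lam i \<le> t*rho" "t*mu i \<le> t*rho" using hr i t by (auto intro: mult_left_mono)
        then have e: "exp(t*lam i) \<le> exp(t*rho)" "exp(t*mu i) \<le> exp(t*rho)" by auto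
        have d: "\<bar>exp(t*lam i) - exp(t*mu i)\<bar> \<le> exp(t*rho)"
          using e exp_gt_zero[of "t*lam i"] exp_gt_zero[of "t*mu i"] by linarith
        have "c i^2 \<le> 1" "s i^2 \<le> 1" using cs[of i] zero_le_power2[of "s i"] zero_le_power2[of "c i"]
          by linarith+
        then have "\<bar>c i\<bar> \<le> 1" "\<bar>s i\<bar> \<le> 1" by (simp_all add: abs_square_le_1)
        then have "\<bar>c i * s i\<bar> \<le> 1" by (simp add: abs_mult mult_le_one)
        then have "\<bar>exp(t*lam i) - exp(t*mu i)\<bar> * \<bar>c i * s i\<bar> \<le> exp(t*rho) * 1"
          using d by (intro mult_mono) auto
        then show ?thesis by (simp add: abs_mult mult.assoc)
      qed
    qed
    finally show ?thesis by simp
  qed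
  show "x*z - y^2 \<ge> exp(t*l0)*z"
  proof -
    define T where "T i v1 v2 = exp(t*lam i) * (c i * v1 + s i * v2)^2 + exp(t*mu i) * (c i * v2 - s i * v1)^2" for i v1 v2
    have q: "x * v1^2 + 2 * y * v1 * v2 + z * v2^2 = (\<Sum>i<n. T i v1 v2)" for v1 v2
    proof -
      have "x * v1^2 + 2 * y * v1 * v2 + z * v2^2 =
        (\<Sum>i<n. (exp(t*lam i) * c i^2 + exp(t*mu i) * s i^2) * v1^2
          + 2 * ((exp(t*lam i) - exp(t*mu i)) * c i * s i) * v1 * v2
          + (exp(t*lam i) * s i^2 + exp(t*mu i) * c i^2) * v2^2)"
        unfolding x_def y_def z_def sum_distrib_right sum_distrib_left sum.distrib[symmetric] mult.assoc ..
      also have "\<dots> = (\<Sum>i<n. T i v1 v2)"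
        by (rule sum.cong) (simp_all add: T_def power2_eq_square algebra_simps)
      finally show ?thesis .
    qed
    have Tnn: "T i v1 v2 \<ge> 0" for i v1 v2 unfolding T_def by simp
    have "T 0 v1 v2 \<le> (\<Sum>i<n. T i v1 v2)" for v1 v2
      by (rule member_le_sum[OF z0 _ fin]) (simp add: Tnn)
    moreover have "exp(t*l0) * v1^2 \<le> T 0 v1 v2" for v1 v2
      unfolding T_def using c0 l0 by simp
    ultimately have qL: "exp(t*l0) * v1^2 \<le> x * v1^2 + 2 * y * v1 * v2 + z * v2^2" for v1 v2
      using q by (metis order_trans)
    have "z * (x*z - y^2) = x * z^2 + 2 * y * z * (-y) + z * (-y)^2"
      by (simp add: power2_eq_square algebra_simps)
    also have "\<dots> \<ge> exp(t*l0) * z^2" using qL[of z "-y"] by simp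
    finally have h: "z * (exp(t*l0) * z) \<le> z * (x*z - y^2)" by (simp add: power2_eq_square algebra_simps)
    have "z > 0"
    proof -
      have zz: "z \<ge> w * exp(t*ms)" by fact
      moreover have "w * exp(t*ms) > 0" using wpos by simp
      ultimately show ?thesis by linarith
    qed
    then show ?thesis using h by (rule mult_left_le_imp_le[rotated])
  qed
qed


theorem lemma4:
  fixes n :: nat and lam mu phi :: "nat \<Rightarrow> real" and S :: mat2
  assumes n: "n \<ge> 1"
    and ord: "\<And>i. i < n \<Longrightarrow> mu i \<le> lam i"
    and phi_rng: "\<And>i. i < n \<Longrightarrow> - (pi/2) \<le> phi i \<and> phi i \<le> pi/2"
    and top1: "lam 0 > mu 0"
    and top2: "\<And>i. 0 < i \<Longrightarrow> i < n \<Longrightarrow> lam 0 > lam i \<and> lam 0 > mu i"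
    and u1: "uvec (phi 0) = e1" and v1: "vvec (phi 0) = e2"
    and lim: "(\<lambda>m::nat. (1 / real m) *\<^sub>R
                 mlog (\<Sum>i<n. mexp (real m *\<^sub>R spec_mat (lam i) (mu i) (phi i))))
              \<longlonglongrightarrow> S"
  shows "S *v e2 =
    Max ({lam i | i. 0 < i \<and> i < n \<and> \<not> aligned (uvec (phi i)) e1}
       \<union> {mu i | i. i < n \<and> \<not> aligned (vvec (phi i)) e1}) *\<^sub>R e2"
proof -
  define c where "c i = cos (phi i)" for i
  define s where "s i = sin (phi i)" for i
  have c0: "c 0 = 1" "s 0 = 0" using u1 unfolding vec2_eq c_def s_def by (simp_all add: uvec_comp e_comp)
  have cs: "c i ^2 + s i ^2 = 1" for i unfolding c_def s_def by simp
  define V where "V = {lam i | i. 0 < i \<and> i < n \<and> \<not> aligned (uvec (phi i)) e1}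
       \<union> {mu i | i. i < n \<and> \<not> aligned (vvec (phi i)) e1}"
  have V: "V = {lam i | i. 0 < i \<and> i < n \<and> s i \<noteq> 0} \<union> {mu i | i. i < n \<and> c i \<noteq> 0}"
    unfolding V_def aligned_u aligned_v c_def s_def ..
  define ms where "ms = Max V"
  have finV: "finite V"
  proof -
    have "V \<subseteq> lam ` {..<n} \<union> mu ` {..<n}" unfolding V by auto
    then show ?thesis by (rule finite_subset) simp
  qed
  have mu0V: "mu 0 \<in> V" unfolding V using n c0 by auto
  have msV: "ms \<in> V" unfolding ms_def using finV mu0V by (intro Max_in) auto
  have leV: "v \<in> V \<Longrightarrow> v \<le> ms" for v unfolding ms_def using finV by simp
  define l0 where "l0 = lam 0"
  have all: "i < n \<Longrightarrow> lam i \<le> l0 \<and> mu i \<le> l0" for i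
    using top1 top2[of i] unfolding l0_def by (cases "i = 0") auto
  have hs: "i < n \<Longrightarrow> s i \<noteq> 0 \<Longrightarrow> lam i \<le> ms" for i
    using c0 by (intro leV) (auto simp: V intro!: exI[of _ i] Nat.gr0I)
  have hc: "i < n \<Longrightarrow> c i \<noteq> 0 \<Longrightarrow> mu i \<le> ms" for i
    by (intro leV) (auto simp: V)
  have mlt: "i < n \<Longrightarrow> mu i < l0" for i
    using top1 top2[of i] unfolding l0_def by (cases "i = 0") auto
  have llt: "0 < i \<Longrightarrow> i < n \<Longrightarrow> lam i < l0" for i
    using top2[of i] unfolding l0_def by auto
  have Vlt: "v \<in> V \<Longrightarrow> v < l0" for v
    unfolding V using mlt llt by auto
  have msl0: "ms < l0" using Vlt[OF msV] .
  obtain i0 w where i0: "i0 < n" and w: "(w = s i0 ^2 \<and> lam i0 = ms) \<or> (w = c i0 ^2 \<and> mu i0 = ms)"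
    and wpos: "w > 0"
  proof -
    have "(\<exists>i. ms = lam i \<and> 0<i \<and> i<n \<and> s i \<noteq> 0) \<or> (\<exists>i. ms = mu i \<and> i<n \<and> c i \<noteq> 0)"
      using msV unfolding V by blast
    then show ?thesis
    proof
      assume "\<exists>i. ms = lam i \<and> 0<i \<and> i<n \<and> s i \<noteq> 0"
      then obtain i where "ms = lam i" "i<n" "s i \<noteq> 0" by blast
      then show ?thesis using that[of i "s i ^2"] by simp
    next
      assume "\<exists>i. ms = mu i \<and> i<n \<and> c i \<noteq> 0"
      then obtain i where "ms = mu i" "i<n" "c i \<noteq> 0" by blast
      then show ?thesis using that[of i "c i ^2"] by simp
    qed
  qed
  have w1: "w \<le> 1" using w cs[of i0] zero_le_power2[of "s i0"] zero_le_power2[of "c i0"] by linarith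
  define R where "R = insert (mu 0) (lam ` {1..<n} \<union> mu ` {1..<n})"
  define rho where "rho = Max R"
  have finR: "finite R" unfolding R_def by simp
  have hr: "0 < i \<Longrightarrow> i < n \<Longrightarrow> lam i \<le> rho \<and> mu i \<le> rho" for i
  proof -
    assume i: "0 < i" "i < n"
    have "lam i \<in> R" "mu i \<in> R" unfolding R_def using i by auto
    then show ?thesis unfolding rho_def using finR by (simp add: Max_ge)
  qed
  have rhol0: "rho < l0"
  proof -
    have "rho \<in> R" unfolding rho_def using finR by (intro Max_in) (auto simp: R_def)
    then show ?thesis unfolding R_def l0_def using top1 top2 by auto
  qed
  define x where "x t = (\<Sum>i<n. exp(t*lam i) * c i^2 + exp(t*mu i) * s i^2)" for t
  define y where "y t = (\<Sum>i<n. (exp(t*lam i) - exp(t*mu i)) * c i * s i)" for t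
  define z where "z t = (\<Sum>i<n. exp(t*lam i) * s i^2 + exp(t*mu i) * c i^2)" for t
  define M where "M t = (\<Sum>i<n. spec_mat (exp (t * lam i)) (exp (t * mu i)) (phi i))" for t
  have Msum: "(\<Sum>i<n. mexp (real m *\<^sub>R spec_mat (lam i) (mu i) (phi i))) = M (real m)" for m
    unfolding M_def by (simp add: spec_scale mexp_spec)
  have Ment: "M t $1$1 = x t" "M t $1$2 = y t" "M t $2$1 = y t" "M t $2$2 = z t" for t
    unfolding M_def x_def y_def z_def by (simp_all add: spec_entries c_def s_def)
  define E where "E t = exp (t * l0)" for t
  define Zs where "Zs t = exp (t * ms)" for t
  define Rh where "Rh t = exp (t * rho)" for t
  define rr where "rr t = sqrt (((x t - z t)/2)^2 + (y t)^2)" for t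
  define al where "al t = (x t + z t)/2 + rr t" for t
  define be where "be t = (x t + z t)/2 - rr t" for t
  define D where "D t = (ln (al t) - ln (be t)) / (al t - be t)" for t
  define C where "C = (l0 - ms) + ln (2 * real n) - ln (w / (2 * real n))"
  have f12: "((1 / real m) *\<^sub>R mlog (M (real m)))$1$2 = (1 / real m) * (D (real m) * y (real m))"
    and f22: "((1 / real m) *\<^sub>R mlog (M (real m)))$2$2 = (1 / real m) * (ln (be (real m)) + D (real m) * (z (real m) - be (real m)))"
    and bnd12: "\<bar>(1 / real m) * (D (real m) * y (real m))\<bar> \<le> C * real n * 2 * exp (real m * (rho - l0))"
    and bnd22: "\<bar>(1 / real m) * (D (real m) * (z (real m) - be (real m)))\<bar> \<le> C * real n * 2 * exp (real m * (ms - l0))"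
    and lbe: "ms + ln (w/(2*real n)) / real m \<le> ln (be (real m)) / real m"
    and ube: "ln (be (real m)) / real m \<le> ms + ln (real n) / real m"
    if m1: "m \<ge> 1" and sep: "2 * real n * Zs (real m) \<le> E (real m)" for m
  proof -
    define t where "t = real m"
    have t1: "t \<ge> 1" using m1 unfolding t_def by simp
    note sb = sum_bounds[of n c s lam l0 mu ms rho i0 w t, OF n c0 cs l0_def[symmetric] all hs hc hr i0 w _ wpos,
        folded x_def y_def z_def]
    have sb1: "x t \<ge> E t" "x t \<le> real n * E t" "z t \<ge> w * Zs t" "z t \<le> real n * Zs t"
      "\<bar>y t\<bar> \<le> real n * Rh t" "x t * z t - (y t)^2 \<ge> E t * z t"
      using sb t1 unfolding E_def Zs_def Rh_def by auto
    have lnEZ: "ln (E t) - ln (Zs t) = t * (l0 - ms)" unfolding E_def Zs_def by (simp add: algebra_simps)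
    note kr = key_real[OF sb1(1-6) wpos w1 _ sep[folded t_def] _ t1 _ lnEZ, folded rr_def al_def be_def D_def,
       folded C_def[unfolded add.assoc[symmetric]]]
    have nn: "real n \<ge> 1" using n by simp
    have g0: "l0 - ms \<ge> 0" using msl0 by simp
    have Zpos: "Zs t > 0" unfolding Zs_def by simp
    note kr = kr[OF nn Zpos g0]
    have Ct: "C \<ge> 0"
    proof -
      have nn2: "1 \<le> real n * real n" using mult_mono[of 1 "real n" 1 "real n"] nn by simp
      have "w/(2*real n) \<le> 2*real n" using w1 wpos nn nn2 by (simp add: field_simps)
      then have "ln (w/(2*real n)) \<le> ln (2 * real n)" using wpos nn by (subst ln_le_cancel_iff) auto
      then show ?thesis unfolding C_def using g0 by linarith
    qed
    have Epos: "E t > 0" unfolding E_def by simp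
    have xpos: "x t > 0" using sb1(1) Epos by simp
    have zpos: "z t > 0" using sb1(3) wpos Zpos by (smt (verit) mult_pos_pos)
    have detpos: "x t * z t - (y t)^2 > 0" using sb1(6) Epos zpos by (smt (verit) mult_pos_pos)
    have r0: "rr t > 0"
    proof -
      have "al t - be t = 2 * rr t" unfolding al_def be_def by simp
      then show ?thesis using kr(1) Epos by simp
    qed
    note me = mlog_entries[of "M t", unfolded Ment, OF refl xpos detpos, folded rr_def al_def be_def, OF r0,
       folded D_def]
    have f12': "((1 / real m) *\<^sub>R mlog (M (real m)))$1$2 = (1 / t) * (D t * y t)"
      unfolding t_def[symmetric] using me(1) by simp
    have f22': "((1 / real m) *\<^sub>R mlog (M (real m)))$2$2 = (1 / t) * (ln (be t) + D t * (z t - be t))"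
      unfolding t_def[symmetric] using me(2) by simp
    show "((1 / real m) *\<^sub>R mlog (M (real m)))$1$2 = (1 / real m) * (D (real m) * y (real m))"
      using f12' unfolding t_def .
    show "((1 / real m) *\<^sub>R mlog (M (real m)))$2$2 = (1 / real m) * (ln (be (real m)) + D (real m) * (z (real m) - be (real m)))"
      using f22' unfolding t_def .
    have tpos: "t > 0" using t1 by simp
    have gen: "\<bar>(1/t) * q\<bar> \<le> C * real n * 2 * exp (t * (a - l0))"
      if q: "\<bar>q\<bar> \<le> t * C * real n * exp (t * a) * (2 / E t)" for q a
    proof -
      have "\<bar>(1/t) * q\<bar> = \<bar>q\<bar> / t" using tpos by (simp add: abs_mult)
      also have "\<dots> \<le> (t * C * real n * exp (t * a) * (2 / E t)) / t" by (rule divide_right_mono[OF q]) (use tpos in simp)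
      also have "\<dots> = C * real n * 2 * (exp (t * a) / exp (t * l0))" using tpos unfolding E_def by simp
      also have "exp (t * a) / exp (t * l0) = exp (t * (a - l0))" by (simp add: exp_diff[symmetric] algebra_simps)
      finally show ?thesis .
    qed
    show "\<bar>(1 / real m) * (D (real m) * y (real m))\<bar> \<le> C * real n * 2 * exp (real m * (rho - l0))"
      using gen[of "D t * y t" rho] kr(6) unfolding D_def Rh_def t_def by simp
    show "\<bar>(1 / real m) * (D (real m) * (z (real m) - be (real m)))\<bar> \<le> C * real n * 2 * exp (real m * (ms - l0))"
      using gen[of "D t * (z t - be t)" ms] kr(7) unfolding D_def Zs_def t_def by simp
    have lZ: "ln (Zs t) = t * ms" unfolding Zs_def by simp
    show "ms + ln (w/(2*real n)) / real m \<le> ln (be (real m)) / real m"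
    proof -
      have "ms + ln (w/(2*real n)) / t = (ln (w/(2*real n)) + ln (Zs t)) / t" using tpos lZ by (simp add: field_simps)
      also have "\<dots> \<le> ln (be t) / t" using kr(4) tpos by (simp add: divide_right_mono)
      finally show ?thesis unfolding t_def .
    qed
    show "ln (be (real m)) / real m \<le> ms + ln (real n) / real m"
    proof -
      have "ln (be t) / t \<le> (ln (real n) + ln (Zs t)) / t" using kr(5) tpos by (simp add: divide_right_mono)
      also have "\<dots> = ms + ln (real n) / t" using tpos lZ by (simp add: field_simps)
      finally show ?thesis unfolding t_def .
    qed
  qed
  have evN: "eventually (\<lambda>m. m \<ge> 1 \<and> 2 * real n * Zs (real m) \<le> E (real m)) sequentially"
  proof -
    have "(\<lambda>m. (2 * real n) * exp (real m * (ms - l0))) \<longlonglongrightarrow> 0"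
      using exp_seq_zero[of "ms - l0"] msl0 by (intro tendsto_mult_right_zero) auto
    then have "eventually (\<lambda>m. (2 * real n) * exp (real m * (ms - l0)) < 1) sequentially"
      by (rule order_tendstoD) simp
    moreover have "eventually (\<lambda>m. m \<ge> 1) sequentially" by (rule eventually_ge_at_top)
    ultimately show ?thesis
    proof (rule eventually_elim2)
      fix m :: nat assume h: "2 * real n * exp (real m * (ms - l0)) < 1" and m: "m \<ge> 1"
      have e: "exp (real m * (ms - l0)) * exp (real m * l0) = exp (real m * ms)"
        unfolding exp_add[symmetric] by (simp add: algebra_simps)
      have "2 * real n * Zs (real m) = (2 * real n * exp (real m * (ms - l0))) * E (real m)"
        unfolding Zs_def E_def mult.assoc e ..
      also have "\<dots> \<le> 1 * E (real m)" using h unfolding E_def by (intro mult_right_mono) auto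
      finally show "m \<ge> 1 \<and> 2 * real n * Zs (real m) \<le> E (real m)" using m by simp
    qed
  qed
  define f where "f m = (1 / real m) *\<^sub>R mlog (M (real m))" for m :: nat
  have limf: "f \<longlonglongrightarrow> S" using lim unfolding f_def Msum .
  have l12: "(\<lambda>m. f m $1$2) \<longlonglongrightarrow> S$1$2" using limf by (intro tendsto_vec_nth)
  have l22: "(\<lambda>m. f m $2$2) \<longlonglongrightarrow> S$2$2" using limf by (intro tendsto_vec_nth)
  have z12: "(\<lambda>m. f m $1$2) \<longlonglongrightarrow> 0"
  proof (rule Lim_null_comparison)
    show "eventually (\<lambda>m. norm (f m $1$2) \<le> C * real n * 2 * exp (real m * (rho - l0))) sequentially"
      using evN by eventually_elim (use f12 bnd12 in \<open>auto simp: f_def\<close>)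
    show "(\<lambda>m. C * real n * 2 * exp (real m * (rho - l0))) \<longlonglongrightarrow> 0"
      using exp_seq_zero[of "rho - l0"] rhol0 by (intro tendsto_mult_right_zero) auto
  qed
  have S12: "S$1$2 = 0" using LIMSEQ_unique[OF l12 z12] .
  have A: "(\<lambda>m. ln (be (real m)) / real m) \<longlonglongrightarrow> ms"
  proof (rule tendsto_sandwich)
    show "eventually (\<lambda>m. ms + ln (w/(2*real n)) / real m \<le> ln (be (real m)) / real m) sequentially"
      using evN by eventually_elim (use lbe in auto)
    show "eventually (\<lambda>m. ln (be (real m)) / real m \<le> ms + ln (real n) / real m) sequentially"
      using evN by eventually_elim (use ube in auto)
    show "(\<lambda>m. ms + ln (w/(2*real n)) / real m) \<longlonglongrightarrow> ms"
      using tendsto_add[OF tendsto_const lim_const_over_n] by simp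
    show "(\<lambda>m. ms + ln (real n) / real m) \<longlonglongrightarrow> ms"
      using tendsto_add[OF tendsto_const lim_const_over_n] by simp
  qed
  have B: "(\<lambda>m. (1 / real m) * (D (real m) * (z (real m) - be (real m)))) \<longlonglongrightarrow> 0"
  proof (rule Lim_null_comparison)
    show "eventually (\<lambda>m. norm ((1 / real m) * (D (real m) * (z (real m) - be (real m)))) \<le> C * real n * 2 * exp (real m * (ms - l0))) sequentially"
      using evN by eventually_elim (use bnd22 in auto)
    show "(\<lambda>m. C * real n * 2 * exp (real m * (ms - l0))) \<longlonglongrightarrow> 0"
      using exp_seq_zero[of "ms - l0"] msl0 by (intro tendsto_mult_right_zero) auto
  qed
  have "(\<lambda>m. ln (be (real m)) / real m + (1 / real m) * (D (real m) * (z (real m) - be (real m)))) \<longlonglongrightarrow> ms"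
    using tendsto_add[OF A B] by simp
  then have z22: "(\<lambda>m. f m $2$2) \<longlonglongrightarrow> ms"
  proof (rule Lim_transform_eventually)
    show "eventually (\<lambda>m. ln (be (real m)) / real m + (1 / real m) * (D (real m) * (z (real m) - be (real m))) = f m $2$2) sequentially"
      using evN by eventually_elim (use f22 in \<open>auto simp: f_def algebra_simps\<close>)
  qed
  have S22: "S$2$2 = ms" using LIMSEQ_unique[OF l22 z22] .
  show ?thesis
    unfolding V_def[symmetric] ms_def[symmetric] vec2_eq
    by (simp add: matrix_vector_mult_def sum_2 e_comp S12 S22)
qed

end
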